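(* If a sequent $\Gamma\Rightarrow\Delta$ is provable in $\mathsf{Grz}_\infty$, then there is a cyclic proof of $\Gamma\Rightarrow\Delta$.
   Context: Formulas are built from $\bot$ and atomic propositions using $\to$ and $\Box$. A sequent is $\Gamma\Rightarrow\Delta$ with $\Gamma,\Delta$ finite multisets of formulas; $\Box\Pi$ denotes $\{\Box B: B\in\Pi\}$ as a multiset. The calculus $\mathsf{Grz}_\infty$ has initial sequents $\Gamma,p\Rightarrow p,\Delta$ ($p$ atomic) and $\Gamma,\bot\Rightarrow\Delta$ and rules: $(\to_L)$ from $\Gamma,B\Rightarrow\Delta$ and $\Gamma\Rightarrow A,\Delta$ infer $\Gamma,A\to B\Rightarrow\Delta$; $(\to_R)$ from $\Gamma,A\Rightarrow B,\Delta$ infer $\Gamma\Rightarrow A\to B,\Delta$; $(\mathsf{refl})$ from $\Gamma,B,\Box B\Rightarrow\Delta$ infer $\Gamma,\Box B\Rightarrow\Delta$; $(\Box)$ from left premise $\Gamma,\Box\Pi\Rightarrow A,\Delta$ and right premise $\Box\Pi\Rightarrow A$ infer $\Gamma,\Box\Pi\Rightarrow\Box A,\Delta$. An $\infty$-proof is a possibly infinite tree of sequents built according to these rules, with leaves labelled by initial sequents, in which every infinite branch passes through a right premise of $(\Box)$ infinitely often; a sequent is provable if it labels the root of an $\infty$-proof. A cyclic proof of $\Gamma\Rightarrow\Delta$ is a pair $(\kappa,d)$ where $\kappa$ is a finite tree of sequents constructed according to the rules of $\mathsf{Grz}_\infty$ with root labelled $\Gamma\Rightarrow\Delta$ (leaves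 need not be initial sequents), and $d$ is a function defined exactly on the leaves of $\kappa$ not labelled by initial sequents such that for each such leaf $a$: $d(a)$ lies on the path from the root of $\kappa$ to $a$; there is a right premise of the rule $(\Box)$ between $a$ and $d(a)$; and $a$ and $d(a)$ are labelled by the same sequent. *)

theory Defs
  imports Main "HOL-Library.Multiset"
begin

datatype 'a fm = Bot | At 'a | Imp "'a fm" "'a fm" | Box "'a fm"

type_synonym 'a sequent = "'a fm multiset \<times> 'a fm multiset"

inductive initial :: "'a sequent \<Rightarrow> bool" where
  ax_at: "initial (add_mset (At p) G, add_mset (At p) D)"
| ax_bot: "initial (add_mset Bot G, D)"

datatype rname = RImpL | RImpR | RRefl | RBox

text \<open>Rule instances: rule name, ordered list of premises, conclusion.
  For (Box) the premise with index 0 is the left premise and index 1 the right premise.\<close>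
inductive rule_inst :: "rname \<Rightarrow> 'a sequent list \<Rightarrow> 'a sequent \<Rightarrow> bool" where
  impL: "rule_inst RImpL [(add_mset B G, D), (G, add_mset A D)] (add_mset (Imp A B) G, D)"
| impR: "rule_inst RImpR [(add_mset A G, add_mset B D)] (G, add_mset (Imp A B) D)"
| refl: "rule_inst RRefl [(add_mset B (add_mset (Box B) G), D)] (add_mset (Box B) G, D)"
| box:  "rule_inst RBox [(G + image_mset Box P, add_mset A D), (image_mset Box P, {#A#})]
            (G + image_mset Box P, add_mset (Box A) D)"

text \<open>A (possibly infinite) tree of sequents is given by a set N of node addresses
  (lists of child indices, root = []), a labelling lab, and for each node the rule
  applied at it (None = leaf).  The children of an internal node n are n@[i] for
  i < number of premises, labelled by the premises in order.\<close>

definition local_ok ::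
  "nat list set \<Rightarrow> (nat list \<Rightarrow> 'a sequent) \<Rightarrow> (nat list \<Rightarrow> rname option) \<Rightarrow> nat list \<Rightarrow> bool" where
  "local_ok N lab rn n \<longleftrightarrow>
     (case rn n of
        None \<Rightarrow> (\<forall>i. n @ [i] \<notin> N)
      | Some r \<Rightarrow> (\<exists>ps. rule_inst r ps (lab n)
                       \<and> (\<forall>i. n @ [i] \<in> N \<longleftrightarrow> i < length ps)
                       \<and> (\<forall>i < length ps. lab (n @ [i]) = ps ! i)))"

definition derivation ::
  "nat list set \<Rightarrow> (nat list \<Rightarrow> 'a sequent) \<Rightarrow> (nat list \<Rightarrow> rname option) \<Rightarrow> bool" where
  "derivation N lab rn \<longleftrightarrow>
     [] \<in> N \<and> (\<forall>n i. n @ [i] \<in> N \<longrightarrow> n \<in> N) \<and> (\<forall>n \<in> N. local_ok N lab rn n)"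

definition right_box_premise :: "(nat list \<Rightarrow> rname option) \<Rightarrow> nat list \<Rightarrow> bool" where
  "right_box_premise rn m \<longleftrightarrow> (\<exists>n. m = n @ [1] \<and> rn n = Some RBox)"

definition infinite_branch :: "nat list set \<Rightarrow> (nat \<Rightarrow> nat list) \<Rightarrow> bool" where
  "infinite_branch N f \<longleftrightarrow> f 0 = [] \<and> (\<forall>k. f k \<in> N \<and> (\<exists>i. f (Suc k) = f k @ [i]))"

definition inf_proof ::
  "nat list set \<Rightarrow> (nat list \<Rightarrow> 'a sequent) \<Rightarrow> (nat list \<Rightarrow> rname option) \<Rightarrow> bool" where
  "inf_proof N lab rn \<longleftrightarrow>
     derivation N lab rn
     \<and> (\<forall>n \<in> N. rn n = None \<longrightarrow> initial (lab n))
     \<and> (\<forall>f. infinite_branch N f \<longrightarrow> (\<forall>m. \<exists>k > m. right_box_premise rn (f k)))"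

definition provable :: "'a sequent \<Rightarrow> bool" where
  "provable s \<longleftrightarrow> (\<exists>N lab rn. inf_proof N lab rn \<and> lab [] = s)"

text \<open>Cyclic proofs: a finite tree (leaves need not be initial) together with a
  back-link function d defined exactly on the non-initial leaves; d(a) is a node on the
  path from the root to a, some node c strictly below d(a) and at or above a is a right
  premise of (Box), and a and d(a) carry the same sequent.\<close>
definition cyclic_proof ::
  "nat list set \<Rightarrow> (nat list \<Rightarrow> 'a sequent) \<Rightarrow> (nat list \<Rightarrow> rname option)
     \<Rightarrow> (nat list \<Rightarrow> nat list option) \<Rightarrow> 'a sequent \<Rightarrow> bool" where
  "cyclic_proof N lab rn d s \<longleftrightarrow>
     finite N \<and> derivation N lab rn \<and> lab [] = s
     \<and> dom d = {a \<in> N. rn a = None \<and> \<not> initial (lab a)}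
     \<and> (\<forall>a b. d a = Some b \<longrightarrow>
           (\<exists>u. a = b @ u)
         \<and> (\<exists>u v. u \<noteq> [] \<and> a = b @ u @ v \<and> right_box_premise rn (b @ u))
         \<and> lab a = lab b)"

definition has_cyclic_proof :: "'a sequent \<Rightarrow> bool" where
  "has_cyclic_proof s \<longleftrightarrow> (\<exists>N lab rn d. cyclic_proof N lab rn d s)"

end

theory Submission
  imports Defs
begin


fun isbox :: "'a fm \<Rightarrow> bool" where
  "isbox (Box _) = True" | "isbox _ = False"

definition Inv :: "'a fm multiset \<Rightarrow> 'a sequent \<Rightarrow> bool" where
  "Inv E s \<longleftrightarrow> (\<forall>x\<in>#E. isbox x) \<and> (\<forall>x\<in>#E. count E x < count (fst s) x)"

definition CEf :: "rname \<Rightarrow> 'a fm multiset \<Rightarrow> nat \<Rightarrow> 'a sequent \<Rightarrow> 'a fm multiset" where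
  "CEf r E i c = (if i = 1 \<and> r = RBox then fst c - mset_set (set_mset (fst c)) else E)"

lemma L1: "\<forall>x\<in>#E. count E x < count (add_mset y G) x \<Longrightarrow> y \<notin># E \<Longrightarrow> \<forall>x\<in>#E. count E x < count G x"
  by (metis count_add_mset)

lemma L2: "\<forall>x\<in>#E. count E x < count (add_mset y G) x \<Longrightarrow> E \<subseteq># G"
  unfolding subseteq_mset_def
proof
  fix a assume h: "\<forall>x\<in>#E. count E x < count (add_mset y G) x"
  show "count E a \<le> count G a"
  proof (cases "a \<in># E")
    case True
    hence "count E a < count (add_mset y G) a" using h by blast
    thus ?thesis by (cases "a = y") auto
  qed (simp add: not_in_iff)
qed

lemma L2': "\<forall>x\<in>#E. count E x < count G x \<Longrightarrow> E \<subseteq># G"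
  unfolding subseteq_mset_def
proof
  fix a assume "\<forall>x\<in>#E. count E x < count G x"
  thus "count E a \<le> count G a" by (cases "a \<in># E") (auto simp: not_in_iff)
qed

lemma L3: "E \<subseteq># G \<Longrightarrow> add_mset y G - E = add_mset y (G - E)"
  unfolding subseteq_mset_def multiset_eq_iff
  by (simp add: Suc_diff_le)

lemma Lmono: "\<forall>x\<in>#E. count E x < count G x \<Longrightarrow> G \<subseteq># G' \<Longrightarrow> \<forall>x\<in>#E. count E x < count G' x"
  by (meson less_le_trans mset_subset_eq_count)

lemma all_lt2: "(\<forall>i<Suc (Suc 0). P i) = (P 0 \<and> P 1)" by (auto simp: less_Suc_eq)
lemma all_lt1: "(\<forall>i<Suc 0. P i) = P 0" by (auto simp: less_Suc_eq)

lemma step: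
  assumes ri: "rule_inst r ps s" and inv: "Inv E s"
  shows "\<exists>ps'. rule_inst r ps' (fst s - E, snd s) \<and> length ps' = length ps \<and>
     (\<forall>i<length ps. ps' ! i = (fst (ps!i) - CEf r E i (ps!i), snd (ps!i)) \<and> Inv (CEf r E i (ps!i)) (ps!i))"
  using ri
proof cases
  case (impL B G D A)
  have nb: "Imp A B \<notin># E" using inv impL unfolding Inv_def by force
  have st: "\<forall>x\<in>#E. count E x < count G x" using L1[OF _ nb] inv impL unfolding Inv_def by auto
  have sub: "E \<subseteq># G" using L2'[OF st] .
  let ?ps = "[(add_mset B (G - E), D), (G - E, add_mset A D)]"
  have "rule_inst r ?ps (fst s - E, snd s)"
    using impL by (simp add: L3[OF sub] rule_inst.impL)
  moreover have "Inv E (add_mset B G, D)" using inv st Lmono[OF st, of "add_mset B G"] unfolding Inv_def by auto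
  moreover have "Inv E (G, add_mset A D)" using inv st unfolding Inv_def by auto
  ultimately show ?thesis
  proof (intro exI[of _ ?ps] conjI)
    show "length ?ps = length ps" using impL by simp
    show "\<forall>i<length ps. ?ps ! i = (fst (ps ! i) - CEf r E i (ps ! i), snd (ps ! i)) \<and> Inv (CEf r E i (ps ! i)) (ps ! i)"
      using impL \<open>Inv E (add_mset B G, D)\<close> \<open>Inv E (G, add_mset A D)\<close> by (simp add: CEf_def all_lt2 L3[OF sub])
  qed
next
  case (impR A G B D)
  have st: "\<forall>x\<in>#E. count E x < count G x" using inv impR unfolding Inv_def by auto
  have sub: "E \<subseteq># G" using L2'[OF st] .
  let ?ps = "[(add_mset A (G - E), add_mset B D)]"
  have "rule_inst r ?ps (fst s - E, snd s)"
    using impR rule_inst.impR by fastforce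
  moreover have "Inv E (add_mset A G, add_mset B D)" using inv st Lmono[OF st, of "add_mset A G"] unfolding Inv_def by auto
  ultimately show ?thesis
  proof (intro exI[of _ ?ps] conjI)
    show "length ?ps = length ps" using impR by simp
    show "\<forall>i<length ps. ?ps ! i = (fst (ps ! i) - CEf r E i (ps ! i), snd (ps ! i)) \<and> Inv (CEf r E i (ps ! i)) (ps ! i)"
      using impR \<open>Inv E (add_mset A G, add_mset B D)\<close> by (simp add: CEf_def all_lt1 L3[OF sub])
  qed
next
  case (refl B G D)
  have st: "\<forall>x\<in>#E. count E x < count (add_mset (Box B) G) x" using inv refl unfolding Inv_def by auto
  have sub: "E \<subseteq># G" using L2[OF st] .
  have sub2: "E \<subseteq># add_mset (Box B) G" using L2'[OF st] .
  let ?ps = "[(add_mset B (add_mset (Box B) (G - E)), D)]"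
  have "rule_inst r ?ps (fst s - E, snd s)"
    using refl by (simp add: L3[OF sub] rule_inst.refl)
  moreover have "Inv E (add_mset B (add_mset (Box B) G), D)"
    using inv st Lmono[OF st, of "add_mset B (add_mset (Box B) G)"] unfolding Inv_def by auto
  ultimately show ?thesis
  proof (intro exI[of _ ?ps] conjI)
    show "length ?ps = length ps" using refl by simp
    show "\<forall>i<length ps. ?ps ! i = (fst (ps ! i) - CEf r E i (ps ! i), snd (ps ! i)) \<and> Inv (CEf r E i (ps ! i)) (ps ! i)"
      using refl \<open>Inv E (add_mset B (add_mset (Box B) G), D)\<close> by (simp add: CEf_def all_lt1 L3[OF sub] L3[OF sub2])
  qed
next
  case (box G P A D)
  define M where "M = G + image_mset Box P"
  define P' where "P' = mset_set (set_mset P)"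
  define X where "X = image_mset Box P'"
  define Y where "Y = image_mset Box P"
  have XY: "X = mset_set (set_mset Y)"
    unfolding X_def Y_def P'_def by (simp add: image_mset_mset_set inj_on_def)
  have st: "\<forall>x\<in>#E. count E x < count M x" using inv box unfolding Inv_def M_def by auto
  have YM: "Y \<subseteq># M" unfolding Y_def M_def by simp
  have Xsub: "X \<subseteq># M - E"
    unfolding subseteq_mset_def
  proof
    fix x
    show "count X x \<le> count (M - E) x"
    proof (cases "x \<in># Y")
      case True
      hence "x \<in># M" using YM by (meson mset_subset_eqD)
      hence "count M x \<ge> 1" by (metis One_nat_def Suc_leI count_greater_zero_iff)
      hence "count (M - E) x \<ge> 1" using st by (cases "x \<in># E") (auto simp: not_in_iff)
      thus ?thesis using True XY by (simp add: count_mset_set)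
    next
      case False thus ?thesis using XY by (simp add: count_mset_set)
    qed
  qed
  have eq1: "M - E - X + X = M - E" using Xsub by (rule subset_mset.diff_add)
  have RB: "rule_inst RBox [(M - E - X + X, add_mset A D), (X, {#A#})] (M - E - X + X, add_mset (Box A) D)"
    unfolding X_def by (rule rule_inst.box)
  have fsE: "(fst s - E, snd s) = (M - E - X + X, add_mset (Box A) D)" using box eq1 M_def by simp
  have ps_eq: "ps = [(M, add_mset A D), (Y, {#A#})]" using box by (simp add: M_def Y_def)
  have R1: "rule_inst r [(M - E, add_mset A D), (X, {#A#})] (fst s - E, snd s)"
    using RB unfolding fsE box(1) eq1 .
  have I0: "Inv E (M, add_mset A D)" using inv box unfolding Inv_def M_def by auto
  have D1: "Y - (Y - mset_set (set_mset Y)) = X"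
    using XY by (simp add: mset_set_set_mset_msubset subset_mset.diff_diff_right)
  have I1: "Inv (Y - mset_set (set_mset Y)) (Y, {#A#})"
    unfolding Inv_def
  proof (intro conjI ballI)
    fix x assume x: "x \<in># Y - mset_set (set_mset Y)"
    hence xy: "x \<in># Y" by (meson in_diffD)
    thus "isbox x" unfolding Y_def by auto
    show "count (Y - mset_set (set_mset Y)) x < count (fst (Y, {#A#})) x"
      using xy by (simp add: count_mset_set)
  qed
  show ?thesis
  proof (intro exI[of _ "[(M - E, add_mset A D), (X, {#A#})]"] conjI)
    show "rule_inst r [(M - E, add_mset A D), (X, {#A#})] (fst s - E, snd s)" by (rule R1)
    show "length [(M - E, add_mset A D), (X, {#A#})] = length ps" by (simp add: ps_eq)
    show "\<forall>i<length ps. [(M - E, add_mset A D), (X, {#A#})] ! i = (fst (ps ! i) - CEf r E i (ps ! i), snd (ps ! i)) \<and>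
        Inv (CEf r E i (ps ! i)) (ps ! i)"
      unfolding ps_eq using I0 I1 D1 box(1) by (simp add: CEf_def all_lt2)
  qed
qed



fun Er :: "(nat list \<Rightarrow> 'a sequent) \<Rightarrow> (nat list \<Rightarrow> rname option) \<Rightarrow> nat list \<Rightarrow> 'a fm multiset" where
  "Er lab rn [] = {#}"
| "Er lab rn (i # r) = (case rn (rev r) of Some q \<Rightarrow> CEf q (Er lab rn r) i (lab (rev r @ [i])) | None \<Rightarrow> Er lab rn r)"

definition Eof where "Eof lab rn n = Er lab rn (rev n)"

lemma Eof_Nil[simp]: "Eof lab rn [] = {#}" by (simp add: Eof_def)
lemma Eof_snoc: "rn n = Some q \<Longrightarrow> Eof lab rn (n @ [i]) = CEf q (Eof lab rn n) i (lab (n @ [i]))"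
  by (simp add: Eof_def)

definition lab2 where "lab2 lab rn n = (fst (lab n) - Eof lab rn n, snd (lab n))"

lemma deriv_prefix: "derivation N lab rn \<Longrightarrow> n @ u \<in> N \<Longrightarrow> n \<in> N"
proof (induction u rule: rev_induct)
  case Nil thus ?case by simp
next
  case (snoc x xs)
  hence "(n @ xs) @ [x] \<in> N" by simp
  hence "n @ xs \<in> N" using snoc.prems(1) unfolding derivation_def by blast
  thus ?case using snoc by blast
qed

lemma local_some:
  assumes "derivation N lab rn" "n \<in> N" "rn n = Some r"
  obtains ps where "rule_inst r ps (lab n)" "\<forall>i. n @ [i] \<in> N \<longleftrightarrow> i < length ps"
    "\<forall>i < length ps. lab (n @ [i]) = ps ! i"
  using assms unfolding derivation_def local_ok_def by force

lemma Inv_all: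
  assumes d: "derivation N lab rn"
  shows "n \<in> N \<Longrightarrow> Inv (Eof lab rn n) (lab n)"
proof (induction n rule: rev_induct)
  case Nil thus ?case by (simp add: Inv_def)
next
  case (snoc i n)
  have nN: "n \<in> N" using snoc.prems d unfolding derivation_def by blast
  have IH: "Inv (Eof lab rn n) (lab n)" using snoc.IH nN .
  show ?case
  proof (cases "rn n")
    case None
    thus ?thesis using snoc.prems d nN unfolding derivation_def local_ok_def by force
  next
    case (Some r)
    obtain ps where ps: "rule_inst r ps (lab n)" "\<forall>i. n @ [i] \<in> N \<longleftrightarrow> i < length ps"
      "\<forall>i < length ps. lab (n @ [i]) = ps ! i" using local_some[OF d nN Some] by blast
    have il: "i < length ps" using ps(2) snoc.prems by blast
    from step[OF ps(1) IH] obtain ps' where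
      "\<forall>i<length ps. ps' ! i = (fst (ps!i) - CEf r (Eof lab rn n) i (ps!i), snd (ps!i)) \<and> Inv (CEf r (Eof lab rn n) i (ps!i)) (ps!i)"
      by blast
    thus ?thesis using il ps(3) Eof_snoc[of rn n r lab, OF Some] by metis
  qed
qed

lemma lab2_proof:
  assumes ip: "inf_proof N lab rn"
  shows "inf_proof N (lab2 lab rn) rn"
proof -
  have d: "derivation N lab rn" using ip unfolding inf_proof_def by blast
  have lok: "local_ok N (lab2 lab rn) rn n" if nN: "n \<in> N" for n
  proof (cases "rn n")
    case None thus ?thesis using d nN unfolding derivation_def local_ok_def by force
  next
    case (Some r)
    obtain ps where ps: "rule_inst r ps (lab n)" "\<forall>i. n @ [i] \<in> N \<longleftrightarrow> i < length ps"
      "\<forall>i < length ps. lab (n @ [i]) = ps ! i" using local_some[OF d nN Some] by blast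
    from step[OF ps(1) Inv_all[OF d nN]] obtain ps' where ps':
      "rule_inst r ps' (fst (lab n) - Eof lab rn n, snd (lab n))" "length ps' = length ps"
      "\<forall>i<length ps. ps' ! i = (fst (ps!i) - CEf r (Eof lab rn n) i (ps!i), snd (ps!i))"
      by blast
    have "\<forall>i<length ps'. lab2 lab rn (n @ [i]) = ps' ! i"
      using ps'(2,3) ps(3) Eof_snoc[of rn n r lab, OF Some] unfolding lab2_def by metis
    thus ?thesis unfolding local_ok_def Some using ps' ps(2) unfolding lab2_def by auto
  qed
  have init: "initial (lab2 lab rn n)" if nN: "n \<in> N" and "rn n = None" for n
  proof -
    have "initial (lab n)" using ip nN \<open>rn n = None\<close> unfolding inf_proof_def by blast
    moreover have "\<forall>x\<in>#Eof lab rn n. isbox x" using Inv_all[OF d nN] unfolding Inv_def by blast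
    ultimately show ?thesis
    proof (cases rule: initial.cases)
      case (ax_at p G D)
      hence "At p \<notin># Eof lab rn n" using \<open>\<forall>x\<in>#Eof lab rn n. isbox x\<close> by force
      hence "fst (lab n) - Eof lab rn n = add_mset (At p) (G - Eof lab rn n)"
        using ax_at by (simp add: diff_union_single_conv in_diff_count not_in_iff)
      thus ?thesis using ax_at initial.ax_at by (simp add: lab2_def)
    next
      case (ax_bot G D)
      hence "Bot \<notin># Eof lab rn n" using \<open>\<forall>x\<in>#Eof lab rn n. isbox x\<close> by force
      hence "fst (lab n) - Eof lab rn n = add_mset Bot (G - Eof lab rn n)"
        using ax_bot by (simp add: diff_union_single_conv in_diff_count not_in_iff)
      thus ?thesis using ax_bot initial.ax_bot by (simp add: lab2_def)
    qed
  qed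
  show ?thesis using ip lok init unfolding inf_proof_def derivation_def by blast
qed



fun sub :: "'a fm \<Rightarrow> 'a fm set" where
  "sub Bot = {Bot}" | "sub (At p) = {At p}"
| "sub (Imp A B) = insert (Imp A B) (sub A \<union> sub B)"
| "sub (Box A) = insert (Box A) (sub A)"

lemma sub_self: "F \<in> sub F" by (cases F) auto
lemma sub_trans: "G \<in> sub F \<Longrightarrow> sub G \<subseteq> sub F" by (induction F) auto
lemma finite_sub: "finite (sub F)" by (induction F) auto

definition Fs :: "'a sequent \<Rightarrow> 'a fm set" where "Fs s = set_mset (fst s) \<union> set_mset (snd s)"
definition SUB :: "'a fm set \<Rightarrow> 'a fm set" where "SUB X = \<Union> (sub ` X)"

lemma SUB_idem: "SUB (SUB X) = SUB X"
  unfolding SUB_def using sub_trans sub_self by blast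
lemma SUB_mono: "X \<subseteq> Y \<Longrightarrow> SUB X \<subseteq> SUB Y" unfolding SUB_def by blast
lemma finite_SUB_Fs: "finite (SUB (Fs s))" unfolding SUB_def Fs_def by (simp add: finite_sub)

lemma rule_sub: "rule_inst r ps c \<Longrightarrow> p \<in> set ps \<Longrightarrow> Fs p \<subseteq> SUB (Fs c)"
proof (induction rule: rule_inst.induct)
  case (impL B G D A) thus ?case unfolding Fs_def SUB_def using sub_self by fastforce
next
  case (impR A G B D) thus ?case unfolding Fs_def SUB_def using sub_self by fastforce
next
  case (refl B G D) thus ?case unfolding Fs_def SUB_def using sub_self by fastforce
next
  case (box G P A D) thus ?case unfolding Fs_def SUB_def using sub_self by fastforce
qed

lemma lab_sub:
  assumes d: "derivation N lab rn"
  shows "n \<in> N \<Longrightarrow> Fs (lab n) \<subseteq> SUB (Fs (lab []))"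
proof (induction n rule: rev_induct)
  case Nil show ?case unfolding SUB_def using sub_self by blast
next
  case (snoc i n)
  have nN: "n \<in> N" using snoc.prems d unfolding derivation_def by blast
  show ?case
  proof (cases "rn n")
    case None
    thus ?thesis using snoc.prems d nN unfolding derivation_def local_ok_def by force
  next
    case (Some r)
    obtain ps where ps: "rule_inst r ps (lab n)" "\<forall>i. n @ [i] \<in> N \<longleftrightarrow> i < length ps"
      "\<forall>i < length ps. lab (n @ [i]) = ps ! i" using local_some[OF d nN Some] by blast
    have il: "i < length ps" using ps(2) snoc.prems by blast
    have "Fs (lab (n @ [i])) \<subseteq> SUB (Fs (lab n))" using rule_sub[OF ps(1)] il ps(3) by auto
    also have "\<dots> \<subseteq> SUB (SUB (Fs (lab [])))" using SUB_mono snoc.IH nN by blast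
    finally show ?thesis by (simp add: SUB_idem)
  qed
qed

lemma rbp_shape:
  assumes d: "derivation N lab rn" and c: "c \<in> N" "right_box_premise rn c"
  shows "\<exists>P A. lab c = (image_mset Box P, {#A#})"
proof -
  obtain n where n: "c = n @ [1]" "rn n = Some RBox" using c unfolding right_box_premise_def by blast
  have nN: "n \<in> N" using c n d unfolding derivation_def by blast
  obtain ps where ps: "rule_inst RBox ps (lab n)" "\<forall>i. n @ [i] \<in> N \<longleftrightarrow> i < length ps"
      "\<forall>i < length ps. lab (n @ [i]) = ps ! i" using local_some[OF d nN n(2)] by blast
  from ps(1) show ?thesis
  proof cases
    case (box G P A D)
    thus ?thesis using ps(3) n(1) by auto
  qed
qed

lemma rule_len: "rule_inst r ps c \<Longrightarrow> length ps \<le> 2"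
  by (induction rule: rule_inst.induct) simp_all

lemma child_lt2:
  assumes d: "derivation N lab rn" and ch: "n @ [i] \<in> N" shows "i < 2"
proof -
  have nN: "n \<in> N" using d ch unfolding derivation_def by blast
  have lo: "local_ok N lab rn n" using d nN unfolding derivation_def by blast
  show ?thesis
  proof (cases "rn n")
    case None
    hence "\<forall>i. n @ [i] \<notin> N" using lo unfolding local_ok_def by simp
    thus ?thesis using ch by blast
  next
    case (Some r)
    obtain ps where ps: "rule_inst r ps (lab n)" "\<forall>i. n @ [i] \<in> N \<longleftrightarrow> i < length ps"
      "\<forall>i < length ps. lab (n @ [i]) = ps ! i" using local_some[OF d nN Some] by blast
    have "length ps \<le> 2" using ps(1) by (rule rule_len)
    moreover have "i < length ps" using ps(2) ch by blast
    ultimately show ?thesis by linarith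
  qed
qed

definition spre :: "nat list \<Rightarrow> nat list \<Rightarrow> bool" where
  "spre m n \<longleftrightarrow> (\<exists>u. u \<noteq> [] \<and> n = m @ u)"

lemma spre_snoc: "spre m (n @ [i]) \<longleftrightarrow> m = n \<or> spre m n"
proof
  assume "spre m (n @ [i])"
  then obtain u where u: "u \<noteq> []" "n @ [i] = m @ u" unfolding spre_def by blast
  obtain u' x where ux: "u = u' @ [x]" using u(1) by (cases u rule: rev_cases) blast+
  hence nu: "n = m @ u'" using u(2) by simp
  show "m = n \<or> spre m n"
  proof (cases "u' = []")
    case True thus ?thesis using nu by simp
  next
    case False thus ?thesis using nu unfolding spre_def by blast
  qed
next
  assume h: "m = n \<or> spre m n"
  show "spre m (n @ [i])"
  proof (cases "m = n")
    case True
    thus ?thesis unfolding spre_def by blast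
  next
    case False
    then obtain u where "u \<noteq> []" "n = m @ u" using h unfolding spre_def by blast
    hence "u @ [i] \<noteq> [] \<and> n @ [i] = m @ (u @ [i])" by simp
    thus ?thesis unfolding spre_def by blast
  qed
qed

lemma spre_Nil: "\<not> spre m []" unfolding spre_def by simp

lemma spre_app: "spre m n \<Longrightarrow> spre m (n @ u)"
proof -
  assume "spre m n"
  then obtain v where "v \<noteq> []" "n = m @ v" unfolding spre_def by blast
  hence "v @ u \<noteq> [] \<and> n @ u = m @ (v @ u)" by simp
  thus ?thesis unfolding spre_def by blast
qed



lemma trunc:
  assumes ip: "inf_proof N lab rn" and fR: "finite R"
    and rb: "\<forall>c\<in>N. right_box_premise rn c \<longrightarrow> lab c \<in> R \<and> \<not> initial (lab c)"
  shows "has_cyclic_proof (lab [])"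
proof -
  have d: "derivation N lab rn" using ip unfolding inf_proof_def by blast
  define closing where "closing c \<longleftrightarrow> c \<in> N \<and> right_box_premise rn c \<and> (\<exists>b. spre b c \<and> lab b = lab c)" for c
  define N2 where "N2 = {n \<in> N. \<forall>m. spre m n \<longrightarrow> \<not> closing m}"
  define rn2 where "rn2 n = (if closing n then None else rn n)" for n
  define dd where "dd a = (if a \<in> N2 \<and> closing a then Some (SOME b. spre b a \<and> lab b = lab a) else None)" for a
  have N2N: "N2 \<subseteq> N" unfolding N2_def by blast
  have N2pre: "n \<in> N2" if "n @ u \<in> N2" for n u
  proof -
    have "n @ u \<in> N" using that N2N by blast
    hence "n \<in> N" using deriv_prefix[OF d] by blast
    moreover have "\<forall>m. spre m n \<longrightarrow> \<not> closing m"
    proof (intro allI impI)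
      fix m assume "spre m n"
      hence "spre m (n @ u)" by (rule spre_app)
      thus "\<not> closing m" using that unfolding N2_def by blast
    qed
    ultimately show ?thesis unfolding N2_def by blast
  qed
  have root: "[] \<in> N2"
  proof -
    have "[] \<in> N" using d unfolding derivation_def by blast
    thus ?thesis using spre_Nil unfolding N2_def by simp
  qed
  have lok: "local_ok N2 lab rn2 n" if nN2: "n \<in> N2" for n
  proof (cases "closing n")
    case True
    have "\<forall>i. n @ [i] \<notin> N2"
    proof
      fix i
      have "spre n (n @ [i])" by (simp add: spre_snoc)
      thus "n @ [i] \<notin> N2" using True unfolding N2_def by blast
    qed
    thus ?thesis using True unfolding local_ok_def rn2_def by simp
  next
    case False
    have rr: "rn2 n = rn n" using False unfolding rn2_def by simp
    have lo: "local_ok N lab rn n" using d nN2 N2N unfolding derivation_def by blast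
    have eqv: "(n @ [i] \<in> N2) = (n @ [i] \<in> N)" for i
    proof
      assume "n @ [i] \<in> N"
      moreover have "\<forall>m. spre m (n @ [i]) \<longrightarrow> \<not> closing m"
      proof (intro allI impI)
        fix m assume "spre m (n @ [i])"
        hence "m = n \<or> spre m n" by (simp add: spre_snoc)
        thus "\<not> closing m" using False nN2 unfolding N2_def by blast
      qed
      ultimately show "n @ [i] \<in> N2" unfolding N2_def by blast
    qed (use N2N in blast)
    show ?thesis using lo unfolding local_ok_def rr eqv .
  qed
  have deriv2: "derivation N2 lab rn2"
    unfolding derivation_def
  proof (intro conjI allI impI ballI)
    show "[] \<in> N2" by (rule root)
    fix n i assume "n @ [i] \<in> N2" thus "n \<in> N2" by (rule N2pre)
  next
    fix n assume "n \<in> N2" thus "local_ok N2 lab rn2 n" by (rule lok)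
  qed
  have fin: "finite N2"
  proof (rule ccontr)
    assume inf: "infinite N2"
    define desc where "desc n = {m \<in> N2. \<exists>u. m = n @ u}" for n
    have split: "desc n \<subseteq> {n} \<union> desc (n @ [0]) \<union> desc (n @ [1])" for n
    proof
      fix m assume "m \<in> desc n"
      then obtain u where mu: "m \<in> N2" "m = n @ u" unfolding desc_def by blast
      show "m \<in> {n} \<union> desc (n @ [0]) \<union> desc (n @ [1])"
      proof (cases u)
        case Nil thus ?thesis using mu by simp
      next
        case (Cons j u')
        hence "(n @ [j]) @ u' \<in> N2" using mu by simp
        hence "n @ [j] \<in> N2" by (rule N2pre)
        hence "j < 2" using child_lt2[OF d] N2N by blast
        hence "j = 0 \<or> j = 1" by linarith
        thus ?thesis using mu Cons unfolding desc_def by auto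
      qed
    qed
    have inf_step: "infinite (desc (n @ [0])) \<or> infinite (desc (n @ [1]))" if "infinite (desc n)" for n
    proof (rule ccontr)
      assume "\<not> (infinite (desc (n @ [0])) \<or> infinite (desc (n @ [1])))"
      hence "finite ({n} \<union> desc (n @ [0]) \<union> desc (n @ [1]))" by simp
      hence "finite (desc n)" using split finite_subset by blast
      thus False using that by blast
    qed
    have inf_in: "n \<in> N2" if infd: "infinite (desc n)" for n
    proof -
      have "desc n \<noteq> {}" using infd by (metis finite.emptyI)
      then obtain m where "m \<in> desc n" by blast
      then obtain u where "n @ u \<in> N2" unfolding desc_def by blast
      thus ?thesis by (rule N2pre)
    qed
    define nxt where "nxt n = (if infinite (desc (n @ [0])) then n @ [0] else n @ [1])" for n
    define f where "f k = (nxt ^^ k) []" for k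
    have fS: "f (Suc k) = nxt (f k)" for k by (simp add: f_def)
    have f0: "f 0 = []" by (simp add: f_def)
    have finf: "infinite (desc (f k))" for k
    proof (induction k)
      case 0
      have "desc [] = N2" unfolding desc_def by auto
      thus ?case using inf f0 by simp
    next
      case (Suc k)
      thus ?case using inf_step[OF Suc] unfolding fS nxt_def by simp
    qed
    have fN2: "f k \<in> N2" for k using inf_in finf by blast
    have fstep: "\<exists>i. f (Suc k) = f k @ [i]" for k
      unfolding fS nxt_def by (cases "infinite (desc (f k @ [0]))") simp_all
    have br: "infinite_branch N f" unfolding infinite_branch_def using fN2 N2N fstep f0 by blast
    have rbinf: "\<forall>m. \<exists>k>m. right_box_premise rn (f k)" using ip br unfolding inf_proof_def by blast
    define K where "K = {k. right_box_premise rn (f k)}"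
    have infK: "infinite K"
    proof
      assume "finite K"
      then obtain m where "\<forall>k\<in>K. k \<le> m" by (auto simp: finite_nat_set_iff_bounded_le)
      moreover obtain k where "k > m" "right_box_premise rn (f k)" using rbinf by blast
      ultimately show False unfolding K_def by force
    qed
    have "(\<lambda>k. lab (f k)) ` K \<subseteq> R" using rb fN2 N2N unfolding K_def by blast
    hence "finite ((\<lambda>k. lab (f k)) ` K)" using fR finite_subset by blast
    hence "\<not> inj_on (\<lambda>k. lab (f k)) K" using finite_imageD infK by blast
    then obtain k1 k2 where kk: "k1 \<in> K" "k2 \<in> K" "k1 \<noteq> k2" "lab (f k1) = lab (f k2)"
      unfolding inj_on_def by blast
    have sp: "spre (f a) (f b)" if "a < b" for a b
      using that
    proof (induction b)
      case 0 thus ?case by simp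
    next
      case (Suc c)
      obtain i where fi: "f (Suc c) = f c @ [i]" using fstep by blast
      have "a = c \<or> a < c" using Suc.prems by linarith
      thus ?case unfolding fi spre_snoc using Suc.IH by blast
    qed
    have no: False if "a < b" "a \<in> K" "b \<in> K" "lab (f a) = lab (f b)" for a b
    proof -
      have "closing (f b)" unfolding closing_def using that fN2 N2N sp[OF that(1)] unfolding K_def by blast
      moreover have "spre (f b) (f (Suc b))" using sp by simp
      ultimately show False using fN2[of "Suc b"] unfolding N2_def by blast
    qed
    show False
    proof (cases "k1 < k2")
      case True thus ?thesis using no kk by blast
    next
      case False
      hence "k2 < k1" using kk(3) by linarith
      thus ?thesis using no kk by metis
    qed
  qed
  have domd: "dom dd = {a \<in> N2. rn2 a = None \<and> \<not> initial (lab a)}"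
  proof (intro set_eqI iffI)
    fix a assume "a \<in> dom dd"
    hence a: "a \<in> N2" "closing a" unfolding dd_def by (auto split: if_splits)
    have "\<not> initial (lab a)" using a rb unfolding closing_def by blast
    thus "a \<in> {a \<in> N2. rn2 a = None \<and> \<not> initial (lab a)}" using a unfolding rn2_def by simp
  next
    fix a assume a: "a \<in> {a \<in> N2. rn2 a = None \<and> \<not> initial (lab a)}"
    have "closing a"
    proof (rule ccontr)
      assume "\<not> closing a"
      hence "rn a = None" using a unfolding rn2_def by simp
      hence "initial (lab a)" using ip a N2N unfolding inf_proof_def by blast
      thus False using a by blast
    qed
    thus "a \<in> dom dd" using a unfolding dd_def dom_def by simp
  qed
  have links: "(\<exists>u. a = b @ u) \<and> (\<exists>u v. u \<noteq> [] \<and> a = b @ u @ v \<and> right_box_premise rn2 (b @ u)) \<and> lab a = lab b"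
    if "dd a = Some b" for a b
  proof -
    have a: "a \<in> N2" "closing a" using that unfolding dd_def by (auto split: if_splits)
    have bdef: "b = (SOME b. spre b a \<and> lab b = lab a)" using that a unfolding dd_def by simp
    have ex: "\<exists>b. spre b a \<and> lab b = lab a" using a unfolding closing_def by blast
    have bp: "spre b a \<and> lab b = lab a" unfolding bdef using someI_ex[OF ex] .
    then obtain u where u: "u \<noteq> []" "a = b @ u" unfolding spre_def by blast
    obtain x where x: "a = x @ [1]" "rn x = Some RBox" using a unfolding closing_def right_box_premise_def by blast
    have "spre x a" unfolding x(1) spre_snoc by simp
    hence "\<not> closing x" using a unfolding N2_def by blast
    hence "rn2 x = Some RBox" using x unfolding rn2_def by simp
    hence rba: "right_box_premise rn2 a" unfolding right_box_premise_def using x(1) by blast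
    show ?thesis using u bp rba by (intro conjI exI[of _ u] exI[of _ "[]"]) auto
  qed
  have "cyclic_proof N2 lab rn2 dd (lab [])"
    unfolding cyclic_proof_def using fin deriv2 domd links by blast
  thus ?thesis unfolding has_cyclic_proof_def by blast
qed



theorem theorem8p5:
  fixes \<Gamma> \<Delta> :: "'a fm multiset"
  assumes "provable (\<Gamma>, \<Delta>)"
  shows "has_cyclic_proof (\<Gamma>, \<Delta>)"
proof -
  obtain N lab rn where ip: "inf_proof N lab rn" and r0: "lab [] = (\<Gamma>, \<Delta>)"
    using assms unfolding provable_def by blast
  have d: "derivation N lab rn" using ip unfolding inf_proof_def by blast
  define SF where "SF = SUB (Fs (lab []))"
  define R where "R = (\<lambda>(S, A). (mset_set S, {#A#})) ` (Pow SF \<times> SF)"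
  have fSF: "finite SF" unfolding SF_def by (rule finite_SUB_Fs)
  have fR: "finite R" unfolding R_def using fSF by (intro finite_imageI finite_cartesian_product) simp_all
  have rb: "\<forall>c\<in>N. right_box_premise rn c \<longrightarrow> lab2 lab rn c \<in> R \<and> \<not> initial (lab2 lab rn c)"
  proof (intro ballI impI)
    fix c assume cN: "c \<in> N" and rbc: "right_box_premise rn c"
    obtain P A where lc: "lab c = (image_mset Box P, {#A#})" using rbp_shape[OF d cN rbc] by blast
    obtain n where n: "c = n @ [1]" "rn n = Some RBox" using rbc unfolding right_box_premise_def by blast
    define Y where "Y = image_mset Box P"
    have "Eof lab rn c = Y - mset_set (set_mset Y)"
      using Eof_snoc[of rn n RBox lab 1] n lc unfolding CEf_def Y_def by simp
    moreover have "Y - (Y - mset_set (set_mset Y)) = mset_set (set_mset Y)"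
      by (simp add: mset_set_set_mset_msubset subset_mset.diff_diff_right)
    moreover have "fst (lab c) = Y" "snd (lab c) = {#A#}" using lc Y_def by simp_all
    ultimately have l2: "lab2 lab rn c = (mset_set (set_mset Y), {#A#})"
      unfolding lab2_def by simp
    have sub: "Fs (lab c) \<subseteq> SF" unfolding SF_def by (rule lab_sub[OF d cN])
    have "set_mset Y \<subseteq> SF" "A \<in> SF" using sub lc Y_def unfolding Fs_def by auto
    hence "(set_mset Y, A) \<in> Pow SF \<times> SF" by simp
    hence "(\<lambda>(S, A). (mset_set S, {#A#})) (set_mset Y, A) \<in> R" unfolding R_def by (rule imageI)
    hence "lab2 lab rn c \<in> R" unfolding l2 by simp
    moreover have "\<not> initial (mset_set (set_mset Y), {#A#})"
    proof
      assume "initial (mset_set (set_mset Y), {#A#})"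
      thus False
      proof cases
        case (ax_at p G D)
        hence "At p \<in># mset_set (set_mset Y)" by (metis fst_conv union_single_eq_member)
        hence "At p \<in># Y" by simp
        thus False unfolding Y_def by auto
      next
        case (ax_bot G)
        hence "Bot \<in># mset_set (set_mset Y)" by (metis fst_conv union_single_eq_member)
        hence "Bot \<in># Y" by simp
        thus False unfolding Y_def by auto
      qed
    qed
    ultimately show "lab2 lab rn c \<in> R \<and> \<not> initial (lab2 lab rn c)" using l2 by simp
  qed
  have "has_cyclic_proof (lab2 lab rn [])" by (rule trunc[OF lab2_proof[OF ip] fR rb])
  moreover have "lab2 lab rn [] = (\<Gamma>, \<Delta>)" unfolding lab2_def using r0 by simp
  ultimately show ?thesis by simp
qed


end
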